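(* Let $N_{\mathbb{R}}$ be a finite dimensional real vector space with dual $M_{\mathbb{R}}$, let $C\subset N_{\mathbb{R}}$ be a convex set with recession cone $\sigma=\mathrm{rec}(C)$, and let $g\colon C\to\mathbb{R}$ be a closed convex function which is bounded above, with recession function $\mathrm{rec}(g)$. Then: (1) for every $x\in C$, the function $y\mapsto g(x+y)-\mathrm{rec}(g)(y)$ on $\sigma$ is bounded above; (2) if $C$ is closed and $g$ is Lipschitz continuous, then for every $x\in C$ and every $m$ in the interior of $\sigma^\vee$, the function $y\mapsto g(x+y)-\mathrm{rec}(g)(y)+m(y)$ on $\sigma$ is bounded below; (3) if $\sigma$ is full dimensional, then for every $x\in C$ and every $0\neq m\in\sigma^\vee$, the function $y\mapsto g(x+y)-\mathrm{rec}(g)(y)+m(y)$ on $\sigma$ is not bounded above.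
   Context: A convex function $g\colon C\to\mathbb{R}$ is closed if its epigraph $\{(x,y)\in C\times\mathbb{R}:y\ge g(x)\}$ is closed in $N_{\mathbb{R}}\times\mathbb{R}$. The recession cone is $\mathrm{rec}(C)=\{y\in N_{\mathbb{R}}:C+y\subset C\}$. The recession function is $\mathrm{rec}(g)(y)=\lim_{\lambda\to+\infty}(g(x+\lambda y)-g(x))/\lambda$ for $y\in\sigma$, which exists, is independent of $x\in C$, and (for $g$ bounded above) takes finite non-positive values. $\sigma^\vee=\{m\in M_{\mathbb{R}}:m(y)\ge0\ \forall y\in\sigma\}$. *)

theory Defs
  imports "HOL-Analysis.Analysis"
begin

definition rec_cone :: "'a::real_vector set \<Rightarrow> 'a set" where
  "rec_cone C = {y. \<forall>x\<in>C. x + y \<in> C}"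

text \<open>Recession function of g : C -> R, computed from a base point of C
  (the limit is independent of the base point).\<close>
definition rec_fun :: "'a::real_normed_vector set \<Rightarrow> ('a \<Rightarrow> real) \<Rightarrow> 'a \<Rightarrow> real" where
  "rec_fun C g y = (let x = (SOME x. x \<in> C) in
      Lim at_top (\<lambda>l::real. (g (x + l *\<^sub>R y) - g x) / l))"

definition closed_fun_on :: "'a::topological_space set \<Rightarrow> ('a \<Rightarrow> real) \<Rightarrow> bool" where
  "closed_fun_on C g \<longleftrightarrow> closed {(x, t). x \<in> C \<and> g x \<le> t}"

text \<open>Dual cone, with M_R identified with N_R via the inner product.\<close>
definition dual_cone :: "'a::real_inner set \<Rightarrow> 'a set" where
  "dual_cone S = {m. \<forall>y\<in>S. 0 \<le> m \<bullet> y}"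

end

theory Submission
  imports Defs
begin
locale rsetup =
  fixes C :: "'a::euclidean_space set" and g :: "'a \<Rightarrow> real" and B :: real
  assumes cvx: "convex C" and cvg: "convex_on C g"
    and clo: "closed_fun_on C g" and bnd: "\<And>x. x \<in> C \<Longrightarrow> g x \<le> B"
begin

definition q :: "'a \<Rightarrow> 'a \<Rightarrow> real \<Rightarrow> real" where
  "q x y l = (g (x + l *\<^sub>R y) - g x) / l"

definition L :: "'a \<Rightarrow> 'a \<Rightarrow> real" where
  "L x y = (SUP t\<in>{0<..}. q x y t)"

lemma ray_nat: "x \<in> C \<Longrightarrow> y \<in> rec_cone C \<Longrightarrow> x + real n *\<^sub>R y \<in> C"
proof (induction n arbitrary: x)
  case 0 then show ?case by simp
next
  case (Suc n)
  have "x + y \<in> C" using Suc.prems by (auto simp: rec_cone_def)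
  from Suc.IH[OF this Suc.prems(2)] show ?case by (simp add: algebra_simps)
qed

lemma ray: assumes "x \<in> C" "y \<in> rec_cone C" "0 \<le> t" shows "x + t *\<^sub>R y \<in> C"
proof (cases "t = 0")
  case True then show ?thesis using assms by simp
next
  case False
  define n where "n = nat \<lceil>t\<rceil>"
  have tn: "t \<le> real n" unfolding n_def by linarith
  have np: "0 < real n" using False assms(3) tn by linarith
  have "(1 - t / real n) *\<^sub>R x + (t / real n) *\<^sub>R (x + real n *\<^sub>R y) \<in> C"
    using convexD[OF cvx assms(1) ray_nat[OF assms(1,2), of n], of "1 - t / real n" "t / real n"]
      tn np assms(3) by (simp add: field_simps)
  moreover have "(1 - t / real n) *\<^sub>R x + (t / real n) *\<^sub>R (x + real n *\<^sub>R y) = x + t *\<^sub>R y"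
    using np by (simp add: algebra_simps)
  ultimately show ?thesis by simp
qed

lemma cone: assumes "y \<in> rec_cone C" "0 \<le> t" shows "t *\<^sub>R y \<in> rec_cone C"
  using ray[OF _ assms] by (auto simp: rec_cone_def)

lemma q_mono: assumes "x \<in> C" "y \<in> rec_cone C" "0 < s" "s \<le> t"
  shows "q x y s \<le> q x y t"
proof -
  have t: "0 < t" using assms by linarith
  have "g ((1 - s/t) *\<^sub>R x + (s/t) *\<^sub>R (x + t *\<^sub>R y)) \<le> (1 - s/t) * g x + (s/t) * g (x + t *\<^sub>R y)"
    using convex_onD[OF cvg, of "s/t" x "x + t *\<^sub>R y"] assms t ray[OF assms(1,2), of t]
    by (simp add: field_simps)
  moreover have "(1 - s/t) *\<^sub>R x + (s/t) *\<^sub>R (x + t *\<^sub>R y) = x + s *\<^sub>R y"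
    using t by (simp add: algebra_simps)
  ultimately have "g (x + s *\<^sub>R y) \<le> (1 - s/t) * g x + (s/t) * g (x + t *\<^sub>R y)"
    by simp
  then have "g (x + s *\<^sub>R y) - g x \<le> (s/t) * (g (x + t *\<^sub>R y) - g x)"
    by (simp add: algebra_simps)
  then have "(g (x + s *\<^sub>R y) - g x) / s \<le> (g (x + t *\<^sub>R y) - g x) / t"
    using assms t by (simp add: field_simps)
  then show ?thesis by (simp add: q_def)
qed

lemma q_le0: assumes "x \<in> C" "y \<in> rec_cone C" "0 < t" shows "q x y t \<le> 0"
proof (rule ccontr)
  assume "\<not> ?thesis"
  then have qp: "0 < q x y t" by simp
  define T where "T = max t ((B - g x) / q x y t + 1)"
  have T: "t \<le> T" "0 < T" using assms by (auto simp: T_def)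
  have "T * q x y t \<le> T * q x y T" using q_mono[OF assms(1,2,3) T(1)] T by simp
  also have "\<dots> = g (x + T *\<^sub>R y) - g x" using T by (simp add: q_def)
  also have "\<dots> \<le> B - g x" using bnd[OF ray[OF assms(1,2), of T]] T by simp
  finally have "T * q x y t \<le> B - g x" .
  moreover have "(B - g x) / q x y t + 1 \<le> T" by (simp add: T_def)
  then have "B - g x + q x y t \<le> T * q x y t" using qp by (simp add: field_simps)
  ultimately show False using qp by simp
qed

lemma bdd: assumes "x \<in> C" "y \<in> rec_cone C" shows "bdd_above (q x y ` {0<..})"
  using q_le0[OF assms] by (auto intro!: bdd_aboveI[of _ 0])

lemma q_le_L: assumes "x \<in> C" "y \<in> rec_cone C" "0 < t" shows "q x y t \<le> L x y"
  unfolding L_def using bdd[OF assms(1,2)] assms(3) by (auto intro!: cSUP_upper)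

lemma L_le0: assumes "x \<in> C" "y \<in> rec_cone C" shows "L x y \<le> 0"
  unfolding L_def using q_le0[OF assms] by (auto intro!: cSUP_least)

lemma L_tendsto: assumes "x \<in> C" "y \<in> rec_cone C" shows "(q x y \<longlongrightarrow> L x y) at_top"
proof (rule order_tendstoI)
  fix a assume "a < L x y"
  then obtain t where t: "t > 0" "a < q x y t"
    unfolding L_def using less_cSUP_iff[OF _ bdd[OF assms]] by auto
  show "\<forall>\<^sub>F s in at_top. a < q x y s"
    using eventually_ge_at_top[of t] 
    by eventually_elim (use t q_mono[OF assms t(1)] in force)
next
  fix a assume "L x y < a"
  show "\<forall>\<^sub>F s in at_top. q x y s < a"
    using eventually_gt_at_top[of 0]
    by eventually_elim (use q_le_L[OF assms] \<open>L x y < a\<close> in force)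
qed

lemma g_le: assumes "x \<in> C" "y \<in> rec_cone C" "0 \<le> t" shows "g (x + t *\<^sub>R y) \<le> g x + t * L x y"
proof (cases "t = 0")
  case False
  then have "q x y t \<le> L x y" using q_le_L[OF assms(1,2)] assms(3) by simp
  then show ?thesis using False assms(3) by (simp add: q_def field_simps)
qed simp
end

context rsetup begin

lemma g_le_other: assumes "x \<in> C" "x' \<in> C" "y \<in> rec_cone C" "0 < t"
  shows "g (x' + t *\<^sub>R y) \<le> g x' + t * L x y"
proof -
  define e where "e n = inverse (real (Suc n))" for n
  have e: "0 < e n" "e n \<le> 1" for n by (auto simp: e_def field_simps)
  define p where "p n = (1 - e n) *\<^sub>R x' + e n *\<^sub>R (x + (t / e n) *\<^sub>R y)" for n
  define v where "v n = (1 - e n) * g x' + e n * g x + t * L x y" for n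
  have pC: "x + (t / e n) *\<^sub>R y \<in> C" for n using ray[OF assms(1,3)] e[of n] assms(4) by simp
  have "(p n, v n) \<in> {(x, t). x \<in> C \<and> g x \<le> t}" for n
  proof -
    have "p n \<in> C" unfolding p_def using convexD[OF cvx assms(2) pC[of n], of "1 - e n" "e n"] e[of n] by simp
    moreover have "g (p n) \<le> (1 - e n) * g x' + e n * g (x + (t / e n) *\<^sub>R y)"
      unfolding p_def using convex_onD[OF cvg, of "e n" x' "x + (t / e n) *\<^sub>R y"] e[of n] assms(2) pC[of n] by simp
    moreover have "e n * g (x + (t / e n) *\<^sub>R y) \<le> e n * (g x + (t / e n) * L x y)"
      using g_le[OF assms(1,3), of "t / e n"] e[of n] assms(4) by (intro mult_left_mono) auto
    moreover have "e n * (g x + (t / e n) * L x y) = e n * g x + t * L x y" using e[of n] by (simp add: field_simps)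
    ultimately show ?thesis unfolding v_def by simp
  qed
  moreover have "e \<longlonglongrightarrow> 0" unfolding e_def using LIMSEQ_inverse_real_of_nat .
  then have "(\<lambda>n. (p n, v n)) \<longlonglongrightarrow> (x' + t *\<^sub>R y, g x' + t * L x y)"
  proof -
    assume e0: "e \<longlonglongrightarrow> 0"
    have pe: "p n = (1 - e n) *\<^sub>R x' + e n *\<^sub>R x + t *\<^sub>R y" for n
      unfolding p_def using e[of n] by (simp add: algebra_simps)
    have "p \<longlonglongrightarrow> (1 - 0) *\<^sub>R x' + 0 *\<^sub>R x + t *\<^sub>R y"
      unfolding pe by (intro tendsto_intros e0)
    moreover have "v \<longlonglongrightarrow> (1 - 0) * g x' + 0 * g x + t * L x y"
      unfolding v_def by (intro tendsto_intros e0)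
    ultimately show ?thesis by (auto intro: tendsto_Pair)
  qed
  ultimately have "(x' + t *\<^sub>R y, g x' + t * L x y) \<in> {(x, t). x \<in> C \<and> g x \<le> t}"
    using clo unfolding closed_fun_on_def by (metis (no_types, lifting) closed_sequentially)
  then show ?thesis by simp
qed

lemma L_indep_le: assumes "x \<in> C" "x' \<in> C" "y \<in> rec_cone C" shows "L x' y \<le> L x y"
  unfolding L_def[of x'] 
proof (rule cSUP_least)
  fix t :: real assume "t \<in> {0<..}"
  then show "q x' y t \<le> L x y" using g_le_other[OF assms, of t] by (simp add: q_def field_simps)
qed simp

lemma L_indep: assumes "x \<in> C" "x' \<in> C" "y \<in> rec_cone C" shows "L x' y = L x y"
  using L_indep_le[OF assms] L_indep_le[OF assms(2,1,3)] by simp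

lemma rec_fun_eq: assumes "x \<in> C" "y \<in> rec_cone C" shows "rec_fun C g y = L x y"
proof -
  define x0 where "x0 = (SOME x. x \<in> C)"
  have x0: "x0 \<in> C" unfolding x0_def using assms(1) by (rule someI)
  have "rec_fun C g y = Lim at_top (q x0 y)" unfolding rec_fun_def x0_def[symmetric] Let_def q_def by simp
  also have "\<dots> = L x0 y" using L_tendsto[OF x0 assms(2)] by (intro tendsto_Lim) auto
  finally show ?thesis using L_indep[OF assms(1) x0 assms(2)] by simp
qed

lemma L_hom: assumes "x \<in> C" "y \<in> rec_cone C" "0 < t" shows "L x (t *\<^sub>R y) = t * L x y"
proof -
  have lim1: "(q x (t *\<^sub>R y) \<longlongrightarrow> L x (t *\<^sub>R y)) at_top" using L_tendsto[OF assms(1) cone[OF assms(2)]] assms(3) by simp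
  have f: "filterlim (\<lambda>s. t * s) at_top at_top"
    using filterlim_tendsto_pos_mult_at_top[OF tendsto_const[of t] assms(3) filterlim_ident] .
  have "((\<lambda>s. t * q x y (t * s)) \<longlongrightarrow> t * L x y) at_top"
    by (intro tendsto_intros filterlim_compose[OF L_tendsto[OF assms(1,2)] f])
  moreover have "\<forall>\<^sub>F s in at_top. t * q x y (t * s) = q x (t *\<^sub>R y) s"
    using eventually_gt_at_top[of 0] by eventually_elim (use assms(3) in \<open>simp add: q_def field_simps\<close>)
  ultimately have "(q x (t *\<^sub>R y) \<longlongrightarrow> t * L x y) at_top" by (rule Lim_transform_eventually)
  then show ?thesis using lim1 by (intro tendsto_unique) auto
qed

lemma L_zero: "L x 0 = 0"
  unfolding L_def q_def by simp

lemma L_lip: assumes "x \<in> C" "u \<in> rec_cone C" "v \<in> rec_cone C" "K-lipschitz_on C g"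
  shows "L x u \<le> L x v + K * norm (u - v)"
  unfolding L_def[of x u]
proof (rule cSUP_least)
  fix t :: real assume "t \<in> {0<..}"
  then have t: "0 < t" by simp
  have "g (x + t *\<^sub>R u) - g (x + t *\<^sub>R v) \<le> K * dist (x + t *\<^sub>R u) (x + t *\<^sub>R v)"
    using lipschitz_onD[OF assms(4) ray[OF assms(1,2)] ray[OF assms(1,3)], of t t] t
    by (simp add: dist_real_def)
  also have "\<dots> = t * (K * norm (u - v))"
    using t by (simp add: dist_norm algebra_simps flip: scaleR_diff_right)
  finally have "q x u t \<le> q x v t + K * norm (u - v)"
    using t by (simp add: q_def field_simps)
  then show "q x u t \<le> L x v + K * norm (u - v)" using q_le_L[OF assms(1,3) t] by simp
qed simp

end
context rsetup begin

lemma part1: assumes "x \<in> C" shows "\<exists>B. \<forall>y\<in>rec_cone C. g (x + y) - rec_fun C g y \<le> B"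
proof (intro exI ballI)
  fix y assume y: "y \<in> rec_cone C"
  show "g (x + y) - rec_fun C g y \<le> g x"
    using g_le[OF assms y, of 1] rec_fun_eq[OF assms y] by simp
qed

lemma part3: assumes "x \<in> C" "m \<in> dual_cone (rec_cone C)" "m \<noteq> 0"
  and full: "aff_dim (rec_cone C) = int DIM('a)"
  shows "\<not> (\<exists>B. \<forall>y\<in>rec_cone C. g (x + y) - rec_fun C g y + m \<bullet> y \<le> B)"
proof
  assume "\<exists>B. \<forall>y\<in>rec_cone C. g (x + y) - rec_fun C g y + m \<bullet> y \<le> B"
  then obtain B' where B': "\<And>y. y \<in> rec_cone C \<Longrightarrow> g (x + y) - rec_fun C g y + m \<bullet> y \<le> B'" by blast
  obtain y where y: "y \<in> rec_cone C" "0 < m \<bullet> y"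
  proof (rule ccontr)
    assume "\<not> thesis"
    then have "\<forall>y\<in>rec_cone C. m \<bullet> y \<le> 0" using that by force
    with assms(2) have "rec_cone C \<subseteq> {y. m \<bullet> y = 0}" by (force simp: dual_cone_def)
    then have "aff_dim (rec_cone C) \<le> aff_dim {y. m \<bullet> y = 0}" by (rule aff_dim_subset)
    with full assms(3) show False by simp
  qed
  define c where "c = m \<bullet> y"
  have "\<forall>\<^sub>F T in at_top. L x y - c/2 < q x y T"
    using L_tendsto[OF assms(1) y(1)] y(2) unfolding c_def by (intro order_tendstoD) auto
  moreover have "\<forall>\<^sub>F T in at_top. max 1 (2 * (B' - g x + 1) / c) < T" by (rule eventually_gt_at_top)
  ultimately have "\<forall>\<^sub>F T in at_top. L x y - c/2 < q x y T \<and> max 1 (2 * (B' - g x + 1) / c) < T"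
    by (rule eventually_conj)
  then obtain T where T: "L x y - c/2 < q x y T" "max 1 (2 * (B' - g x + 1) / c) < T"
    using eventually_happens[of _ at_top] by (metis (lifting) eventually_at_top_linorder order_refl)
  have Tp: "0 < T" using T by simp
  have c: "0 < c" using y c_def by simp
  have TC: "T *\<^sub>R y \<in> rec_cone C" using cone[OF y(1)] Tp by simp
  have val: "g (x + T *\<^sub>R y) - rec_fun C g (T *\<^sub>R y) + m \<bullet> (T *\<^sub>R y) = g x + T * (q x y T - L x y + c)"
    using rec_fun_eq[OF assms(1) TC] L_hom[OF assms(1) y(1) Tp] Tp
    by (simp add: q_def c_def field_simps)
  have "2 * (B' - g x + 1) / c < T" using T by simp
  then have "2 * (B' - g x + 1) < T * c" using c by (simp add: field_simps)
  moreover have "T * (c/2) \<le> T * (q x y T - L x y + c)" using T(1) Tp by (intro mult_left_mono) auto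
  ultimately have "B' < g x + T * (q x y T - L x y + c)" by (simp add: field_simps)
  with B'[OF TC] val show False by simp
qed

end
context rsetup begin

lemma closed_rec: assumes "closed C" shows "closed (rec_cone C)"
proof -
  have "rec_cone C = (\<Inter>x\<in>C. (\<lambda>y. x + y) -` C)" by (auto simp: rec_cone_def)
  moreover have "closed ((\<lambda>y. x + y) -` C)" for x
    by (intro continuous_closed_vimage continuous_intros assms)
  ultimately show ?thesis by auto
qed

lemma part2: assumes "closed C" "K-lipschitz_on C g" "x \<in> C" "m \<in> interior (dual_cone (rec_cone C))"
  shows "\<exists>B. \<forall>y\<in>rec_cone C. B \<le> g (x + y) - rec_fun C g y + m \<bullet> y"
proof -
  have K0: "0 \<le> K" using lipschitz_on_nonneg[OF assms(2)] .
  obtain r where r: "0 < r" "cball m r \<subseteq> dual_cone (rec_cone C)"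
    using assms(4) mem_interior_cball by blast
  have mlow: "r * norm y \<le> m \<bullet> y" if y: "y \<in> rec_cone C" for y
  proof (cases "y = 0")
    case False
    define z where "z = m - (r / norm y) *\<^sub>R y"
    have "z \<in> cball m r" using False r(1) by (simp add: z_def dist_norm)
    then have "0 \<le> z \<bullet> y" using r(2) y by (auto simp: dual_cone_def)
    also have "z \<bullet> y = m \<bullet> y - r * norm y"
      using False by (simp add: z_def inner_diff_left power2_norm_eq_inner[symmetric] power2_eq_square)
    finally show ?thesis by simp
  qed simp
  define S where "S = rec_cone C \<inter> sphere 0 1"
  have cS: "compact S" unfolding S_def by (intro closed_Int_compact closed_rec assms(1) compact_sphere)
  have "\<exists>Ku. \<forall>t\<ge>0. - (r/4) * t - Ku \<le> g (x + t *\<^sub>R u) - t * L x u" if u: "u \<in> S" for u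
  proof -
    have uC: "u \<in> rec_cone C" and nu: "norm u = 1" using u by (auto simp: S_def)
    have "\<forall>\<^sub>F T in at_top. L x u - r/4 < q x u T"
      using L_tendsto[OF assms(3) uC] r(1) by (intro order_tendstoD) auto
    then obtain T0 where T0: "\<And>T. T \<ge> T0 \<Longrightarrow> L x u - r/4 < q x u T"
      by (auto simp: eventually_at_top_linorder)
    define T where "T = max 1 T0"
    have T: "0 < T" "\<And>t. t \<ge> T \<Longrightarrow> L x u - r/4 < q x u t" using T0 by (auto simp: T_def)
    show ?thesis
    proof (intro exI allI impI)
      fix t :: real assume t: "0 \<le> t"
      show "- (r/4) * t - (K * T + \<bar>g x\<bar>) \<le> g (x + t *\<^sub>R u) - t * L x u"
      proof (cases "t \<ge> T")
        case True
        then have tp: "0 < t" using T by simp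
        have "t * (L x u - r/4) \<le> t * q x u t" using T(2)[OF True] tp by (intro mult_left_mono) auto
        then have "t * (L x u - r/4) \<le> g (x + t *\<^sub>R u) - g x" using tp by (simp add: q_def)
        moreover have "t * (L x u - r/4) = t * L x u - (r/4) * t" by (simp add: algebra_simps)
        moreover have "0 \<le> K * T" using K0 T(1) by simp
        moreover have "- g x \<le> \<bar>g x\<bar>" by simp
        ultimately show ?thesis by linarith
      next
        case False
        have "dist (g (x + t *\<^sub>R u)) (g x) \<le> K * dist (x + t *\<^sub>R u) x"
          using lipschitz_onD[OF assms(2) ray[OF assms(3) uC t] assms(3)] .
        then have "g x - K * t \<le> g (x + t *\<^sub>R u)" using nu t by (simp add: dist_norm dist_real_def)
        moreover have "K * t \<le> K * T" using False K0 by (intro mult_left_mono) auto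
        moreover have "t * L x u \<le> 0" using L_le0[OF assms(3) uC] t by (simp add: mult_nonneg_nonpos)
        moreover have "0 \<le> (r/4) * t" using r(1) t by simp
        moreover have "- g x \<le> \<bar>g x\<bar>" by simp
        ultimately show ?thesis by linarith
      qed
    qed
  qed
  then obtain Kf where Kf: "\<And>u t. u \<in> S \<Longrightarrow> 0 \<le> t \<Longrightarrow> - (r/4) * t - Kf u \<le> g (x + t *\<^sub>R u) - t * L x u"
    by metis
  define d where "d = r / (8 * (K + 1))"
  have d: "0 < d" using r(1) K0 by (simp add: d_def)
  have d2: "2 * K * d \<le> r / 4"
    using r(1) K0 by (simp add: d_def field_simps)
  have cov: "S \<subseteq> (\<Union>u\<in>S. ball u d)" using d by auto
  have opn: "\<And>T. T \<in> S \<Longrightarrow> open (ball T d)" by simp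
  obtain F where F: "F \<subseteq> S" "finite F" "S \<subseteq> (\<Union>u\<in>F. ball u d)"
    using compactE_image[OF cS opn cov] by blast
  define Kt where "Kt = (\<Sum>u\<in>F. \<bar>Kf u\<bar>)"
  have KfKt: "Kf u \<le> Kt" if "u \<in> F" for u
  proof -
    have "\<bar>Kf u\<bar> \<le> Kt" unfolding Kt_def using F(2) that by (intro member_le_sum) auto
    then show ?thesis by simp
  qed
  show ?thesis
  proof (intro exI ballI)
    fix y assume y: "y \<in> rec_cone C"
    show "min (g x) (- Kt) \<le> g (x + y) - rec_fun C g y + m \<bullet> y"
    proof (cases "y = 0")
      case True
      then show ?thesis using rec_fun_eq[OF assms(3) y] by (simp add: L_zero)
    next
      case False
      define t where "t = norm y"
      have tp: "0 < t" using False by (simp add: t_def)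
      define u where "u = (1 / t) *\<^sub>R y"
      have yu: "y = t *\<^sub>R u" using tp by (simp add: u_def)
      have uS: "u \<in> S" using cone[OF y, of "1/t"] tp by (simp add: S_def u_def t_def)
      then obtain v where v: "v \<in> F" "dist v u < d" using F(3) by auto
      have vS: "v \<in> S" using v F(1) by auto
      have uC: "u \<in> rec_cone C" and vC: "v \<in> rec_cone C" using uS vS by (auto simp: S_def)
      have "dist (g (x + t *\<^sub>R v)) (g (x + t *\<^sub>R u)) \<le> K * dist (x + t *\<^sub>R v) (x + t *\<^sub>R u)"
        using lipschitz_onD[OF assms(2) ray[OF assms(3) vC] ray[OF assms(3) uC]] tp by simp
      also have "dist (x + t *\<^sub>R v) (x + t *\<^sub>R u) = t * dist v u"
        using tp by (simp add: dist_norm flip: scaleR_diff_right)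
      finally have g1: "g (x + t *\<^sub>R v) - K * (t * dist v u) \<le> g (x + t *\<^sub>R u)"
        by (simp add: dist_real_def)
      have L1: "L x u \<le> L x v + K * dist v u"
        using L_lip[OF assms(3) uC vC assms(2)] by (simp add: dist_norm norm_minus_commute)
      have rf: "rec_fun C g y = t * L x u"
        using rec_fun_eq[OF assms(3) y] L_hom[OF assms(3) uC tp] yu by simp
      have Kv: "- (r/4) * t - Kt \<le> g (x + t *\<^sub>R v) - t * L x v"
        using Kf[OF vS, of t] KfKt[OF v(1)] tp by simp
      have e1: "K * (t * dist v u) \<le> t * (K * d)"
        using v(2) K0 tp by (simp add: mult_left_mono mult.left_commute)
      have e2: "t * L x u \<le> t * L x v + t * (K * d)"
      proof -
        have "t * L x u \<le> t * (L x v + K * dist v u)" using mult_left_mono[OF L1, of t] tp by simp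
        also have "\<dots> = t * L x v + t * (K * dist v u)" by (simp add: algebra_simps)
        also have "t * (K * dist v u) \<le> t * (K * d)" using v(2) K0 tp by (intro mult_left_mono) auto
        finally show ?thesis by simp
      qed
      have e3: "t * (2 * K * d) \<le> t * (r/4)" using d2 tp by (intro mult_left_mono) auto
      have "r * t \<le> m \<bullet> y" using mlow[OF y] by (simp add: t_def)
      moreover have "t * (2 * K * d) = 2 * (t * (K * d))" by simp
      moreover have "t * (r/4) = (r/4) * t" by simp
      moreover have "0 \<le> (r/4) * t" using r(1) tp by simp
      moreover have "g (x + y) = g (x + t *\<^sub>R u)" using yu by simp
      ultimately have "- Kt \<le> g (x + y) - rec_fun C g y + m \<bullet> y"
        using g1 Kv e1 e2 e3 rf by linarith
      then show ?thesis by simp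
    qed
  qed
qed

end

theorem lemma2p27:
  fixes C :: "'a::euclidean_space set" and g :: "'a \<Rightarrow> real"
  assumes "convex C"
    and "convex_on C g"
    and "closed_fun_on C g"
    and "\<exists>B. \<forall>x\<in>C. g x \<le> B"
  shows "(\<forall>x\<in>C. \<exists>B. \<forall>y\<in>rec_cone C. g (x + y) - rec_fun C g y \<le> B)
    \<and> ((closed C \<and> (\<exists>L. L-lipschitz_on C g)) \<longrightarrow>
         (\<forall>x\<in>C. \<forall>m\<in>interior (dual_cone (rec_cone C)).
            \<exists>B. \<forall>y\<in>rec_cone C. B \<le> g (x + y) - rec_fun C g y + m \<bullet> y))
    \<and> (aff_dim (rec_cone C) = int DIM('a) \<longrightarrow>
         (\<forall>x\<in>C. \<forall>m\<in>dual_cone (rec_cone C). m \<noteq> 0 \<longrightarrow>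
            \<not> (\<exists>B. \<forall>y\<in>rec_cone C. g (x + y) - rec_fun C g y + m \<bullet> y \<le> B)))"
proof -
  obtain B where B: "\<And>x. x \<in> C \<Longrightarrow> g x \<le> B" using assms(4) by blast
  interpret rsetup C g B using assms B by unfold_locales auto
  show ?thesis
    using part1 part2 part3 by blast
qed

end
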